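(* Let $0.1<\gamma\le 1$, let $r=k$ be an integer with $3\le k<0.01\log^{1/2}n$, and let $n$ be sufficiently large. Then every set of $\gamma n^k$ vertices of $\mathcal{H}(n,k,k)$ spans at least $$\frac{\gamma^{k+1}\,n^{2k}}{k!\cdot 2^{3k^2}\cdot 10\cdot 2^{3k}\cdot k\cdot\log n}$$ hyperedges.
   Context: Logarithms are to base 2. For integers $n,k,r\ge3$, $\mathcal{H}(n,k,r)$ is the $r$-uniform hypergraph with vertex set $[n]^k$ whose edges are all $r$-element subsets of $[n]^k$ lying on a common line in $\mathbb{R}^k$. A vertex set spans an edge if the edge is contained in it. *)

theory Defs
  imports Complex_Main
begin

definition grid :: "nat \<Rightarrow> nat \<Rightarrow> (nat \<Rightarrow> int) set" where
  "grid n k = {x. (\<forall>i<k. 1 \<le> x i \<and> x i \<le> int n) \<and> (\<forall>i\<ge>k. x i = 0)}"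

definition on_common_line :: "nat \<Rightarrow> (nat \<Rightarrow> int) set \<Rightarrow> bool" where
  "on_common_line k A \<longleftrightarrow>
     (\<exists>p d :: nat \<Rightarrow> real. (\<exists>i<k. d i \<noteq> 0) \<and>
        (\<forall>x\<in>A. \<exists>t::real. \<forall>i<k. real_of_int (x i) = p i + t * d i))"

definition H_edges :: "nat \<Rightarrow> nat \<Rightarrow> nat \<Rightarrow> (nat \<Rightarrow> int) set set" where
  "H_edges n k r = {e. e \<subseteq> grid n k \<and> card e = r \<and> on_common_line k e}"

definition spanned_edges :: "nat \<Rightarrow> nat \<Rightarrow> nat \<Rightarrow> (nat \<Rightarrow> int) set \<Rightarrow> nat" where
  "spanned_edges n k r S = card {e \<in> H_edges n k r. e \<subseteq> S}"

end

theory Submission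
  imports Defs "HOL-Analysis.Analysis"
begin


lemma vt1: "\<forall>a\<in>{x::nat\<Rightarrow>'b::zero. (\<forall>i<k. x i \<in> A i) \<and> (\<forall>i\<ge>k. x i = 0)}. (\<lambda>i. if i < k then restrict a {..<k} i else 0) = a"
    by (auto simp: fun_eq_iff)
lemma vt2: "\<forall>a'\<in>\<Pi>\<^sub>E i\<in>{..<k}. A i. restrict (\<lambda>i. if i < k then a' i else (0::'b::zero)) {..<k} = a'"
    by (auto simp: fun_eq_iff PiE_def extensional_def)
lemma vt3: "(\<lambda>e i. if i < k then e i else 0) ` (\<Pi>\<^sub>E i\<in>{..<k}. A i) \<subseteq> {x::nat\<Rightarrow>'b::zero. (\<forall>i<k. x i \<in> A i) \<and> (\<forall>i\<ge>k. x i = 0)}"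
proof (rule image_subsetI)
  fix e assume e: "e \<in> (\<Pi>\<^sub>E i\<in>{..<k}. A i)"
  have "\<forall>i<k. e i \<in> A i" using e by (simp add: PiE_iff)
  then show "(\<lambda>i. if i < k then e i else 0) \<in> {x::nat\<Rightarrow>'b::zero. (\<forall>i<k. x i \<in> A i) \<and> (\<forall>i\<ge>k. x i = 0)}"
    by simp
qed
lemma vt4: "(\<lambda>x. restrict x {..<k}) ` {x::nat\<Rightarrow>'b::zero. (\<forall>i<k. x i \<in> A i) \<and> (\<forall>i\<ge>k. x i = 0)} \<subseteq> (\<Pi>\<^sub>E i\<in>{..<k}. A i)"
proof (rule image_subsetI)
  fix x :: "nat \<Rightarrow> 'b" assume "x \<in> {x. (\<forall>i<k. x i \<in> A i) \<and> (\<forall>i\<ge>k. x i = 0)}"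
  then have "\<forall>i<k. x i \<in> A i" by simp
  then show "restrict x {..<k} \<in> (\<Pi>\<^sub>E i\<in>{..<k}. A i)" by (simp add: restrict_PiE_iff)
qed

lemma vecs_inj: "inj_on (\<lambda>x. restrict x {..<k}) {x::nat\<Rightarrow>'b::zero. (\<forall>i<k. x i \<in> A i) \<and> (\<forall>i\<ge>k. x i = 0)}"
proof (rule inj_onI)
  fix x y :: "nat \<Rightarrow> 'b"
  assume x: "x \<in> {x. (\<forall>i<k. x i \<in> A i) \<and> (\<forall>i\<ge>k. x i = 0)}"
    and y: "y \<in> {x. (\<forall>i<k. x i \<in> A i) \<and> (\<forall>i\<ge>k. x i = 0)}"
    and e: "restrict x {..<k} = restrict y {..<k}"
  show "x = y"
  proof
    fix i show "x i = y i"
    proof (cases "i < k")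
      case True
      have "restrict x {..<k} i = restrict y {..<k} i" using e by simp
      then show ?thesis using True by simp
    next
      case False then show ?thesis using x y by simp
    qed
  qed
qed

lemma vecs_img: "(\<lambda>x. restrict x {..<k}) ` {x::nat\<Rightarrow>'b::zero. (\<forall>i<k. x i \<in> A i) \<and> (\<forall>i\<ge>k. x i = 0)} = (\<Pi>\<^sub>E i\<in>{..<k}. A i)"
proof
  show "(\<lambda>x. restrict x {..<k}) ` {x::nat\<Rightarrow>'b::zero. (\<forall>i<k. x i \<in> A i) \<and> (\<forall>i\<ge>k. x i = 0)} \<subseteq> (\<Pi>\<^sub>E i\<in>{..<k}. A i)"
    by (rule vt4)
  show "(\<Pi>\<^sub>E i\<in>{..<k}. A i) \<subseteq> (\<lambda>x. restrict x {..<k}) ` {x::nat\<Rightarrow>'b::zero. (\<forall>i<k. x i \<in> A i) \<and> (\<forall>i\<ge>k. x i = 0)}"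
  proof
    fix e assume e: "e \<in> (\<Pi>\<^sub>E i\<in>{..<k}. A i)"
    define x where "x = (\<lambda>i. if i < k then e i else (0::'b))"
    have m: "x \<in> {x::nat\<Rightarrow>'b::zero. (\<forall>i<k. x i \<in> A i) \<and> (\<forall>i\<ge>k. x i = 0)}"
      using vt3[of k A] e unfolding x_def by blast
    have r: "restrict x {..<k} = e"
    proof
      fix i show "restrict x {..<k} i = e i"
      proof (cases "i < k")
        case True then show ?thesis unfolding x_def by simp
      next
        case False
        then have "e i = undefined" using PiE_arb[OF e] by simp
        then show ?thesis using False by simp
      qed
    qed
    show "e \<in> (\<lambda>x. restrict x {..<k}) ` {x::nat\<Rightarrow>'b::zero. (\<forall>i<k. x i \<in> A i) \<and> (\<forall>i\<ge>k. x i = 0)}"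
      by (rule image_eqI[where f="\<lambda>x. restrict x {..<k}", OF r[symmetric] m])
  qed
qed

lemma vecs_bij:
  "bij_betw (\<lambda>x. restrict x {..<k}) {x::nat\<Rightarrow>'b::zero. (\<forall>i<k. x i \<in> A i) \<and> (\<forall>i\<ge>k. x i = 0)} (\<Pi>\<^sub>E i\<in>{..<k}. A i)"
  by (rule bij_betw_imageI[OF vecs_inj[of k A] vecs_img[of k A]])

lemma card_vecs:
  "card {x::nat\<Rightarrow>'b::zero. (\<forall>i<k. x i \<in> A i) \<and> (\<forall>i\<ge>k. x i = 0)} = (\<Prod>i<k. card (A i))"
proof -
  have "card {x::nat\<Rightarrow>'b::zero. (\<forall>i<k. x i \<in> A i) \<and> (\<forall>i\<ge>k. x i = 0)} = card (\<Pi>\<^sub>E i\<in>{..<k}. A i)"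
    by (rule bij_betw_same_card[OF vecs_bij[of k A]])
  also have "\<dots> = (\<Prod>i<k. card (A i))" by (rule card_PiE) simp
  finally show ?thesis .
qed

lemma finite_vecs:
  assumes "\<And>i. i < k \<Longrightarrow> finite (A i)"
  shows "finite {x::nat\<Rightarrow>'b::zero. (\<forall>i<k. x i \<in> A i) \<and> (\<forall>i\<ge>k. x i = 0)}"
proof -
  have f: "finite (\<Pi>\<^sub>E i\<in>{..<k}. A i)"
    by (rule finite_PiE) (simp_all add: assms)
  have "bij_betw (\<lambda>x. restrict x {..<k}) {x::nat\<Rightarrow>'b::zero. (\<forall>i<k. x i \<in> A i) \<and> (\<forall>i\<ge>k. x i = 0)} (\<Pi>\<^sub>E i\<in>{..<k}. A i)"
    by (rule vecs_bij)
  from bij_betw_finite[OF this] f show ?thesis by (simp only:)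
qed



lemma convex_pow_nonneg: "convex_on {0::real..} (\<lambda>x. x^k)"
proof (cases "even k")
  case True then show ?thesis using convex_power_even convex_on_subset by blast
next
  case False then show ?thesis using convex_power_odd by blast
qed

lemma power_mean:
  fixes t :: "'a \<Rightarrow> real"
  assumes "finite R" "R \<noteq> {}" "\<And>x. x \<in> R \<Longrightarrow> t x \<ge> 0"
  shows "real (card R) * ((\<Sum>x\<in>R. t x) / real (card R)) ^ k \<le> (\<Sum>x\<in>R. t x ^ k)"
proof -
  have c: "real (card R) > 0" using assms by (simp add: card_gt_0_iff)
  have "((\<Sum>x\<in>R. (1 / real (card R)) *\<^sub>R t x)) ^ k \<le> (\<Sum>x\<in>R. (1 / real (card R)) * t x ^ k)"
    using convex_on_sum[OF assms(1,2) convex_pow_nonneg, where a="\<lambda>_. 1 / real (card R)" and y=t]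
    using assms c by auto
  then have h: "((\<Sum>x\<in>R. t x) / real (card R)) ^ k \<le> (\<Sum>x\<in>R. t x ^ k) / real (card R)"
    by (simp add: sum_divide_distrib[symmetric] sum_distrib_left[symmetric])
  have "real (card R) * ((\<Sum>x\<in>R. t x) / real (card R)) ^ k \<le> real (card R) * ((\<Sum>x\<in>R. t x ^ k) / real (card R))"
    using c h by (intro mult_left_mono) auto
  then show ?thesis using c by simp
qed


lemma sum_inv_sq: "n \<ge> 2 \<Longrightarrow> (\<Sum>t\<in>{2..n}. 1 / (real t)^2) \<le> 3/4 - 1 / real n"
proof (induction n rule: nat_induct_at_least)
  case base then show ?case by simp
next
  case (Suc n)
  have "(\<Sum>t\<in>{2..Suc n}. 1 / (real t)^2) = (\<Sum>t\<in>{2..n}. 1 / (real t)^2) + 1 / (real n + 1)^2"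
    using Suc by (simp add: sum.cl_ivl_Suc add.commute)
  also have "\<dots> \<le> 3/4 - 1 / real n + 1 / (real n + 1)^2" using Suc by simp
  also have "\<dots> \<le> 3/4 - 1 / real (Suc n)"
  proof -
    have n: "real n \<ge> 2" using Suc.hyps by simp
    have e: "1 / real n - 1 / (real n + 1) = 1 / (real n * (real n + 1))"
      using n by (simp add: field_simps)
    have "1 / (real n + 1)^2 \<le> 1 / (real n * (real n + 1))"
    proof (rule divide_left_mono)
      show "real n * (real n + 1) \<le> (real n + 1)^2" by (simp add: power2_eq_square)
      show "0 < (real n + 1)^2 * (real n * (real n + 1))" using n by simp
    qed simp
    then have "1 / (real n + 1)^2 \<le> 1 / real n - 1 / (real n + 1)" using e by simp
    moreover have s: "real (Suc n) = real n + 1" by simp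
    ultimately show ?thesis unfolding s by linarith
  qed
  finally show ?case .
qed



definition cA :: "nat \<Rightarrow> nat \<Rightarrow> int set" where
  "cA m i = (if i = 0 then {int m} else {0..<int m})"
definition dirs :: "nat \<Rightarrow> nat \<Rightarrow> (nat \<Rightarrow> int) set" where
  "dirs k m = {d. (\<forall>i<k. d i \<in> cA m i) \<and> (\<forall>i\<ge>k. d i = 0)}"
definition prim :: "nat \<Rightarrow> (nat \<Rightarrow> int) \<Rightarrow> bool" where
  "prim k d \<longleftrightarrow> (\<forall>t::int. t > 1 \<longrightarrow> \<not> (\<forall>i<k. t dvd d i))"
definition DD :: "nat \<Rightarrow> nat \<Rightarrow> (nat \<Rightarrow> int) set" where
  "DD k m = {d \<in> dirs k m. prim k d}"
definition rA :: "nat \<Rightarrow> nat \<Rightarrow> nat \<Rightarrow> int set" where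
  "rA n m i = (if i = 0 then {1..int m} else {1 - int n..int n})"
definition RR :: "nat \<Rightarrow> nat \<Rightarrow> nat \<Rightarrow> (nat \<Rightarrow> int) set" where
  "RR k n m = {x. (\<forall>i<k. x i \<in> rA n m i) \<and> (\<forall>i\<ge>k. x i = 0)}"
definition jj :: "nat \<Rightarrow> (nat \<Rightarrow> int) \<Rightarrow> int" where
  "jj m y = (y 0 - 1) div int m"
definition rep :: "nat \<Rightarrow> (nat \<Rightarrow> int) \<Rightarrow> (nat \<Rightarrow> int) \<Rightarrow> (nat \<Rightarrow> int)" where
  "rep m d y = (\<lambda>i. y i - jj m y * d i)"
definition fib :: "(nat \<Rightarrow> int) set \<Rightarrow> nat \<Rightarrow> (nat \<Rightarrow> int) \<Rightarrow> (nat \<Rightarrow> int) \<Rightarrow> (nat \<Rightarrow> int) set" where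
  "fib S m d x = {y \<in> S. rep m d y = x}"
definition ksets :: "'a set \<Rightarrow> nat \<Rightarrow> 'a set set" where
  "ksets T k = {U. U \<subseteq> T \<and> card U = k}"

lemma prod_shift_const:
  assumes "\<And>i. i > 0 \<Longrightarrow> f i = c"
  shows "(\<Prod>i<Suc k'. f i) = f 0 * c ^ k'"
proof -
  have "(\<Prod>i<Suc k'. f i) = f 0 * (\<Prod>i<k'. f (Suc i))" by (rule prod.lessThan_Suc_shift)
  also have "(\<Prod>i<k'. f (Suc i)) = (\<Prod>i<k'. c)" using assms by (intro prod.cong) auto
  finally show ?thesis by simp
qed

lemma card_dirs: assumes "k \<ge> 1" shows "card (dirs k m) = m ^ (k - 1)"
proof -
  obtain k' where k: "k = Suc k'" using assms by (cases k) auto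
  have "card (dirs k m) = (\<Prod>i<k. card (cA m i))" unfolding dirs_def by (rule card_vecs)
  also have "\<dots> = card (cA m 0) * m ^ k'" unfolding k
    by (rule prod_shift_const) (simp add: cA_def)
  finally show ?thesis by (simp add: k cA_def)
qed

lemma finite_dirs: "finite (dirs k m)"
  unfolding dirs_def by (rule finite_vecs) (simp add: cA_def)

lemma card_RR: assumes "k \<ge> 1" shows "card (RR k n m) = m * (2 * n) ^ (k - 1)"
proof -
  obtain k' where k: "k = Suc k'" using assms by (cases k) auto
  have "card (RR k n m) = (\<Prod>i<k. card (rA n m i))" unfolding RR_def by (rule card_vecs)
  also have "\<dots> = card (rA n m 0) * (2 * n) ^ k'" unfolding k
    by (rule prod_shift_const) (simp add: rA_def nat_int_add)
  finally show ?thesis by (simp add: k rA_def)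
qed

lemma finite_RR: "finite (RR k n m)"
  unfolding RR_def by (rule finite_vecs) (simp add: rA_def)

lemma rep_in_RR:
  assumes y: "y \<in> grid n k" and d: "d \<in> dirs k m" and m: "m \<ge> 1" and k: "k \<ge> 1"
  shows "rep m d y \<in> RR k n m"
proof -
  have y0: "1 \<le> y 0" "y 0 \<le> int n" using y k unfolding grid_def by auto
  define j where "j = jj m y"
  have mpos: "int m > 0" using m by simp
  have e: "j * int m + (y 0 - 1) mod int m = y 0 - 1" unfolding j_def jj_def by (rule div_mult_mod_eq)
  have r: "0 \<le> (y 0 - 1) mod int m" "(y 0 - 1) mod int m < int m"
    using mpos by (rule pos_mod_sign, rule pos_mod_bound)
  have jm: "j * int m \<le> y 0 - 1" "y 0 - 1 < j * int m + int m"
    using e r by linarith+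
  have j0: "j \<ge> 0" unfolding j_def jj_def using y0 mpos by (simp add: pos_imp_zdiv_nonneg_iff)
  have "rep m d y i \<in> rA n m i" if i: "i < k" for i
  proof (cases "i = 0")
    case True
    have "d 0 = int m" using d k unfolding dirs_def cA_def by auto
    then show ?thesis using True jm unfolding rep_def rA_def j_def by auto
  next
    case False
    have di: "0 \<le> d i" "d i < int m" using d i False unfolding dirs_def cA_def by auto
    have yi: "1 \<le> y i" "y i \<le> int n" using y i unfolding grid_def by auto
    have a: "j * d i \<le> j * int m" using di j0 by (intro mult_left_mono) auto
    have b: "0 \<le> j * d i" using di j0 by simp
    show ?thesis using False a b jm yi y0 unfolding rep_def rA_def j_def by auto
  qed
  moreover have "rep m d y i = 0" if "i \<ge> k" for i
    using that y d unfolding rep_def grid_def dirs_def by auto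
  ultimately show ?thesis unfolding RR_def by blast
qed



lemma prim_eq:
  assumes pd: "prim k d" and pd': "prim k d'" and k: "0 < k"
    and d0: "d 0 > 0" and d0': "d' 0 > 0" and u: "u \<noteq> 0" and v: "v \<noteq> 0"
    and eq: "\<forall>i<k. u * d i = v * d' i"
  shows "\<forall>i<k. d i = d' i"
proof -
  define g where "g = gcd u v"
  have g0: "g \<noteq> 0" unfolding g_def using u by simp
  obtain u' v' where u': "u = u' * g" and v': "v = v' * g" and cop: "coprime u' v'"
    using gcd_coprime_exists[of u v] g0 unfolding g_def by blast
  have eq': "\<forall>i<k. u' * d i = v' * d' i"
  proof (intro allI impI)
    fix i assume "i < k"
    then have "g * (u' * d i) = g * (v' * d' i)" using eq u' v' by (simp add: ac_simps)
    then show "u' * d i = v' * d' i" using g0 by simp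
  qed
  have "\<forall>i<k. v' dvd d i"
  proof (intro allI impI)
    fix i assume "i < k"
    then have "v' dvd u' * d i" using eq' by simp
    then show "v' dvd d i" using cop coprime_commute coprime_dvd_mult_right_iff by blast
  qed
  then have "\<forall>i<k. \<bar>v'\<bar> dvd d i" by simp
  then have av: "\<bar>v'\<bar> = 1" using pd v v' unfolding prim_def
    by (metis abs_ge_zero le_less mult_eq_0_iff not_less zero_less_abs_iff linorder_neqE_linordered_idom
        int_one_le_iff_zero_less abs_zero)
  have "\<forall>i<k. u' dvd d' i"
  proof (intro allI impI)
    fix i assume "i < k"
    then have "u' dvd v' * d' i" using eq' by (metis dvd_triv_left)
    then show "u' dvd d' i" using cop coprime_dvd_mult_right_iff by blast
  qed
  then have "\<forall>i<k. \<bar>u'\<bar> dvd d' i" by simp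
  then have au: "\<bar>u'\<bar> = 1" using pd' u u' unfolding prim_def
    by (metis abs_ge_zero le_less mult_eq_0_iff not_less zero_less_abs_iff linorder_neqE_linordered_idom
        int_one_le_iff_zero_less abs_zero)
  have "u' * d 0 = v' * d' 0" using eq' k by simp
  then have "u' = v'" using au av d0 d0'
    by (smt (verit) mult_minus_left mult_pos_pos abs_if)
  then show ?thesis using eq' au by auto
qed



definition bA :: "nat \<Rightarrow> nat \<Rightarrow> nat \<Rightarrow> int set" where
  "bA m t i = (if i = 0 then {a \<in> {int m}. int t dvd a} else {a \<in> {0..<int m}. int t dvd a})"
definition VV :: "nat \<Rightarrow> nat \<Rightarrow> nat \<Rightarrow> (nat \<Rightarrow> int) set" where
  "VV k m t = {x. (\<forall>i<k. x i \<in> bA m t i) \<and> (\<forall>i\<ge>k. x i = 0)}"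

lemma card_multiples:
  assumes t: "t > 0" and tm: "t dvd m"
  shows "card {a \<in> {0..<int m}. int t dvd a} \<le> m div t"
proof -
  have sub: "{a \<in> {0..<int m}. int t dvd a} \<subseteq> (\<lambda>j. int t * j) ` {0..<int (m div t)}"
  proof
    fix a assume a: "a \<in> {a \<in> {0..<int m}. int t dvd a}"
    then obtain q where q: "a = int t * q" by (auto elim: dvdE)
    have mt: "int m = int t * int (m div t)" using tm by (metis dvd_mult_div_cancel of_nat_mult)
    have "0 \<le> int t * q" "int t * q < int t * int (m div t)" using a q mt by auto
    then have "0 \<le> q" "q < int (m div t)" using t
      by (simp add: zero_le_mult_iff, simp add: mult_less_cancel_left)
    then show "a \<in> (\<lambda>j. int t * j) ` {0..<int (m div t)}" using q by auto
  qed
  have "card {a \<in> {0..<int m}. int t dvd a} \<le> card ((\<lambda>j. int t * j) ` {0..<int (m div t)})"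
    by (rule card_mono[OF _ sub]) simp
  also have "\<dots> \<le> card {0..<int (m div t)}" by (rule card_image_le) simp
  finally show ?thesis by simp
qed

lemma finite_VV: "finite (VV k m t)"
  unfolding VV_def
proof (rule finite_vecs)
  fix i
  have "finite {a \<in> {0..<int m}. int t dvd a}" by (rule finite_subset[of _ "{0..<int m}"]) auto
  then show "finite (bA m t i)" unfolding bA_def by simp
qed

lemma card_VV:
  assumes k: "k \<ge> 1" and t: "t \<ge> 1"
  shows "real (card (VV k m t)) \<le> (real m / real t) ^ (k - 1)"
proof -
  obtain k' where kk: "k = Suc k'" using k by (cases k) auto
  have "card (VV k m t) = (\<Prod>i<k. card (bA m t i))" unfolding VV_def by (rule card_vecs)
  also have "\<dots> = card (bA m t 0) * card {a \<in> {0..<int m}. int t dvd a} ^ k'" unfolding kk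
    by (rule prod_shift_const) (simp add: bA_def)
  finally have c: "card (VV k m t) = card (bA m t 0) * card {a \<in> {0..<int m}. int t dvd a} ^ k'" .
  show ?thesis
  proof (cases "t dvd m")
    case False
    then have "bA m t 0 = {}" unfolding bA_def by auto
    then show ?thesis using c by simp
  next
    case True
    have b0: "card (bA m t 0) \<le> 1" unfolding bA_def by (simp add: card_le_Suc0_iff_eq)
    have "card {a \<in> {0..<int m}. int t dvd a} \<le> m div t" using card_multiples[OF _ True] t by simp
    then have p: "card {a \<in> {0..<int m}. int t dvd a} ^ k' \<le> (m div t) ^ k'" by (rule power_mono) simp
    have "card (VV k m t) \<le> 1 * (m div t) ^ k'" unfolding c by (rule mult_le_mono[OF b0 p])
    then have "real (card (VV k m t)) \<le> real ((m div t) ^ k')" by simp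
    also have "\<dots> = (real m / real t) ^ k'" using True by (simp add: real_of_nat_div)
    finally show ?thesis using kk by simp
  qed
qed

lemma nonprim_sub:
  assumes k: "k \<ge> 1" and m: "m \<ge> 1"
  shows "{d \<in> dirs k m. \<not> prim k d} \<subseteq> (\<Union>t\<in>{2..m}. VV k m t)"
proof
  fix d assume d: "d \<in> {d \<in> dirs k m. \<not> prim k d}"
  then obtain t :: int where t: "t > 1" "\<forall>i<k. t dvd d i" unfolding prim_def by auto
  have d0: "d 0 = int m" using d k unfolding dirs_def cA_def by auto
  have "t dvd int m" using t(2) k d0 by (metis less_le_trans zero_less_one)
  then have tm: "t \<le> int m" using m by (simp add: zdvd_imp_le)
  define s where "s = nat t"
  have st: "int s = t" using t unfolding s_def by simp
  have s2: "s \<in> {2..m}" using t tm st by auto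
  have "d \<in> VV k m s"
    unfolding VV_def
  proof (intro CollectI conjI allI impI)
    fix i assume i: "i < k"
    show "d i \<in> bA m s i"
      using d i t(2) st unfolding bA_def dirs_def cA_def by auto
  next
    fix i assume "k \<le> i" then show "d i = 0" using d unfolding dirs_def by auto
  qed
  then show "d \<in> (\<Union>t\<in>{2..m}. VV k m t)" using s2 by blast
qed

lemma card_DD:
  assumes k: "k \<ge> 3" and m: "m \<ge> 1"
  shows "real (card (DD k m)) \<ge> real m ^ (k - 1) / 4"
proof -
  let ?NP = "{d \<in> dirs k m. \<not> prim k d}"
  have "card ?NP \<le> card (\<Union>t\<in>{2..m}. VV k m t)"
  proof (rule card_mono)
    show "finite (\<Union>t\<in>{2..m}. VV k m t)" by (intro finite_UN_I finite_VV) simp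
    show "?NP \<subseteq> (\<Union>t\<in>{2..m}. VV k m t)" using nonprim_sub[of k m] k m by simp
  qed
  also have "\<dots> \<le> (\<Sum>t\<in>{2..m}. card (VV k m t))" by (rule card_UN_le) simp
  finally have h: "card ?NP \<le> (\<Sum>t\<in>{2..m}. card (VV k m t))" .
  have "real (card ?NP) \<le> real (\<Sum>t\<in>{2..m}. card (VV k m t))" using h by (simp only: of_nat_le_iff)
  also have "\<dots> = (\<Sum>t\<in>{2..m}. real (card (VV k m t)))" by (rule of_nat_sum)
  also have "\<dots> \<le> (\<Sum>t\<in>{2..m}. real m ^ (k - 1) * (1 / (real t)^2))"
  proof (rule sum_mono)
    fix t assume t: "t \<in> {2..m}"
    have "real (card (VV k m t)) \<le> (real m / real t) ^ (k - 1)" using k t by (intro card_VV) auto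
    also have "\<dots> = real m ^ (k - 1) * (1 / real t ^ (k - 1))" by (simp add: power_divide)
    also have "\<dots> \<le> real m ^ (k - 1) * (1 / (real t)^2)"
    proof (rule mult_left_mono)
      have "real t ^ 2 \<le> real t ^ (k - 1)" using t k by (intro power_increasing) auto
      then show "1 / real t ^ (k - 1) \<le> 1 / (real t)^2" using t by (intro divide_left_mono) auto
    qed simp
    finally show "real (card (VV k m t)) \<le> real m ^ (k - 1) * (1 / (real t)^2)" .
  qed
  also have "\<dots> = real m ^ (k - 1) * (\<Sum>t\<in>{2..m}. 1 / (real t)^2)" by (simp add: sum_distrib_left)
  also have "\<dots> \<le> real m ^ (k - 1) * (3/4)"
  proof (rule mult_left_mono)
    show "(\<Sum>t\<in>{2..m}. 1 / (real t)^2) \<le> 3/4"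
    proof (cases "m \<ge> 2")
      case True
      have "1 / real m \<ge> 0" by simp
      then show ?thesis using sum_inv_sq[OF True] by linarith
    next
      case False then show ?thesis by simp
    qed
  qed simp
  finally have np: "real (card ?NP) \<le> 3/4 * real m ^ (k - 1)" by simp
  have "DD k m = dirs k m - ?NP" unfolding DD_def by auto
  then have "card (DD k m) = card (dirs k m) - card ?NP"
    using finite_dirs by (simp add: card_Diff_subset)
  moreover have "card ?NP \<le> card (dirs k m)" using finite_dirs by (intro card_mono) auto
  ultimately have "real (card (DD k m)) = real (card (dirs k m)) - real (card ?NP)" by simp
  also have "real (card (dirs k m)) = real m ^ (k - 1)" using card_dirs k by simp
  finally show ?thesis using np by simp
qed



lemma binom_lb:
  assumes k: "k \<ge> 1"
  shows "(max (real s - real k) 0 / real k) ^ k \<le> real (s choose k)"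
proof (cases "k \<le> s")
  case True
  have "max (real s - real k) 0 / real k \<le> real s / real k" using k by (intro divide_right_mono) auto
  then have "(max (real s - real k) 0 / real k) ^ k \<le> (real s / real k) ^ k" by (intro power_mono) auto
  also have "\<dots> \<le> real (s choose k)" using binomial_ge_n_over_k_pow_k[OF True] by simp
  finally show ?thesis .
next
  case False
  then have "max (real s - real k) 0 = 0" by simp
  then have "(max (real s - real k) 0 / real k) ^ k = 0" using k by (simp add: power_0_left)
  then show ?thesis by (simp only:)
qed

lemma jensen_binom:
  fixes s :: "'a \<Rightarrow> nat"
  assumes R: "finite R" "R \<noteq> {}" and k: "k \<ge> 1"
    and big: "real (\<Sum>x\<in>R. s x) \<ge> 2 * real k * real (card R)"
  shows "(\<Sum>x\<in>R. real (s x choose k)) \<ge> (real (\<Sum>x\<in>R. s x)) ^ k / (2 ^ k * real k ^ k * real (card R) ^ (k - 1))"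
proof -
  define A where "A = real (\<Sum>x\<in>R. s x)"
  define c where "c = real (card R)"
  define t where "t x = max (real (s x) - real k) 0" for x
  have c0: "c > 0" using R unfolding c_def by (simp add: card_gt_0_iff)
  have kr: "real k > 0" using k by simp
  have t0: "\<And>x. t x \<ge> 0" unfolding t_def by simp
  have s1: "(\<Sum>x\<in>R. real (s x choose k)) \<ge> (\<Sum>x\<in>R. t x ^ k) / real k ^ k"
  proof -
    have "(\<Sum>x\<in>R. t x ^ k) / real k ^ k = (\<Sum>x\<in>R. (t x / real k) ^ k)"
      by (simp add: sum_divide_distrib power_divide)
    also have "\<dots> \<le> (\<Sum>x\<in>R. real (s x choose k))"
      by (rule sum_mono) (unfold t_def, rule binom_lb[OF k])
    finally show ?thesis .
  qed
  have s3: "(\<Sum>x\<in>R. t x ^ k) \<ge> c * ((\<Sum>x\<in>R. t x) / c) ^ k"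
    unfolding c_def by (rule power_mean[OF R]) (simp add: t0)
  have s4: "(\<Sum>x\<in>R. t x) \<ge> A / 2"
  proof -
    have "(\<Sum>x\<in>R. t x) \<ge> (\<Sum>x\<in>R. real (s x) - real k)"
      by (rule sum_mono) (simp add: t_def)
    also have "(\<Sum>x\<in>R. real (s x) - real k) = A - real k * c"
      unfolding A_def c_def by (simp add: sum_subtractf)
    finally show ?thesis using big unfolding A_def c_def by linarith
  qed
  have A0: "A \<ge> 0" unfolding A_def by (rule of_nat_0_le_iff)
  have s5: "((\<Sum>x\<in>R. t x) / c) ^ k \<ge> (A / (2 * c)) ^ k"
  proof (rule power_mono)
    show "A / (2 * c) \<le> (\<Sum>x\<in>R. t x) / c" using s4 c0 by (simp add: field_simps)
    show "0 \<le> A / (2 * c)" using A0 c0 by simp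
  qed
  have s6: "c * (A / (2 * c)) ^ k = A ^ k / (2 ^ k * c ^ (k - 1))"
  proof -
    have ck: "c ^ k = c * c ^ (k - 1)" using k by (metis Suc_diff_1 less_le_trans power_Suc zero_less_one)
    have "c * (A / (2 * c)) ^ k = c * (A ^ k / (2 ^ k * c ^ k))" by (simp add: power_divide power_mult_distrib)
    also have "\<dots> = A ^ k / (2 ^ k * c ^ (k - 1))" using c0 unfolding ck by (simp add: field_simps)
    finally show ?thesis .
  qed
  have "c * (A / (2 * c)) ^ k \<le> c * ((\<Sum>x\<in>R. t x) / c) ^ k"
    using c0 by (intro mult_left_mono[OF s5]) simp
  then have "A ^ k / (2 ^ k * c ^ (k - 1)) \<le> (\<Sum>x\<in>R. t x ^ k)"
    unfolding s6 using s3 by linarith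
  then have "A ^ k / (2 ^ k * c ^ (k - 1)) / real k ^ k \<le> (\<Sum>x\<in>R. t x ^ k) / real k ^ k"
    using kr by (intro divide_right_mono) auto
  also have "\<dots> \<le> (\<Sum>x\<in>R. real (s x choose k))" by (rule s1)
  finally show ?thesis unfolding A_def c_def by (simp add: field_simps)
qed



lemma grid_eq: "grid n k = {x. (\<forall>i<k. x i \<in> (\<lambda>_. {1..int n}) i) \<and> (\<forall>i\<ge>k. x i = 0)}"
  unfolding grid_def by auto

lemma finite_grid: "finite (grid n k)"
  unfolding grid_eq by (rule finite_vecs) simp

lemma rep_eq: "rep m d y = x \<Longrightarrow> y i = x i + jj m y * d i"
  unfolding rep_def by auto

lemma fib_sum:
  assumes S: "S \<subseteq> grid n k" and d: "d \<in> dirs k m" and m: "m \<ge> 1" and k: "k \<ge> 1"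
  shows "(\<Sum>x\<in>RR k n m. card (fib S m d x)) = card S"
proof -
  have "S = (\<Union>x\<in>RR k n m. fib S m d x)"
  proof
    show "S \<subseteq> (\<Union>x\<in>RR k n m. fib S m d x)"
    proof
      fix y assume y: "y \<in> S"
      then have "rep m d y \<in> RR k n m" using rep_in_RR[OF _ d m k] S by blast
      moreover have "y \<in> fib S m d (rep m d y)" using y unfolding fib_def by simp
      ultimately show "y \<in> (\<Union>x\<in>RR k n m. fib S m d x)" by blast
    qed
    show "(\<Union>x\<in>RR k n m. fib S m d x) \<subseteq> S" unfolding fib_def by auto
  qed
  moreover have "card (\<Union>x\<in>RR k n m. fib S m d x) = (\<Sum>x\<in>RR k n m. card (fib S m d x))"
  proof (rule card_UN_disjoint)
    show "finite (RR k n m)" by (rule finite_RR)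
    have fS: "finite S" using S finite_grid finite_subset by blast
    show "\<forall>x\<in>RR k n m. finite (fib S m d x)" unfolding fib_def using fS by simp
    show "\<forall>x\<in>RR k n m. \<forall>x'\<in>RR k n m. x \<noteq> x' \<longrightarrow> fib S m d x \<inter> fib S m d x' = {}"
      unfolding fib_def by auto
  qed
  ultimately show ?thesis by simp
qed

lemma ksets_edge:
  assumes U: "U \<in> ksets (fib S m d x) k" and S: "S \<subseteq> grid n k" and d: "d \<in> dirs k m"
    and m: "m \<ge> 1" and k: "k \<ge> 1"
  shows "U \<in> {e \<in> H_edges n k k. e \<subseteq> S}"
proof -
  have cU: "card U = k" and Uf: "U \<subseteq> fib S m d x" using U unfolding ksets_def by auto
  have US: "U \<subseteq> S" using Uf unfolding fib_def by auto
  have d0: "d 0 = int m" using d k unfolding dirs_def cA_def by auto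
  have c1: "\<exists>i<k. real_of_int (d i) \<noteq> 0" using d0 m k by (intro exI[of _ 0]) simp
  have c2: "\<forall>y\<in>U. \<exists>t. \<forall>i<k. real_of_int (y i) = real_of_int (x i) + t * real_of_int (d i)"
  proof
    fix y assume "y \<in> U"
    then have "rep m d y = x" using Uf unfolding fib_def by auto
    then have "\<forall>i<k. real_of_int (y i) = real_of_int (x i) + real_of_int (jj m y) * real_of_int (d i)"
      using rep_eq[of m d y x] by simp
    then show "\<exists>t. \<forall>i<k. real_of_int (y i) = real_of_int (x i) + t * real_of_int (d i)" by blast
  qed
  have "on_common_line k U"
    unfolding on_common_line_def
    by (rule exI[of _ "\<lambda>i. real_of_int (x i)"], rule exI[of _ "\<lambda>i. real_of_int (d i)"]) (use c1 c2 in simp)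
  then show ?thesis using US cU S unfolding H_edges_def by auto
qed

lemma ksets_disj:
  assumes d: "d \<in> DD k m" and d': "d' \<in> DD k m'" and m: "m \<ge> 1" and m': "m' \<ge> 1" and k: "k \<ge> 2"
    and ne: "(d, x) \<noteq> (d', x')"
  shows "ksets (fib S m d x) k \<inter> ksets (fib S m' d' x') k = {}"
proof (rule ccontr)
  assume "ksets (fib S m d x) k \<inter> ksets (fib S m' d' x') k \<noteq> {}"
  then obtain U where U1: "U \<subseteq> fib S m d x" and U2: "U \<subseteq> fib S m' d' x'" and cU: "card U = k"
    unfolding ksets_def by auto
  have fU: "finite U" using cU k by (metis card.infinite not_numeral_le_zero)
  have "\<not> card U \<le> Suc 0" using k cU by simp
  then have "\<not> (\<forall>a\<in>U. \<forall>b\<in>U. a = b)" using card_le_Suc0_iff_eq[OF fU] by simp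
  then obtain y z where yz: "y \<in> U" "z \<in> U" "y \<noteq> z" by blast
  have ry: "rep m d y = x" "rep m d z = x" using yz U1 unfolding fib_def by auto
  have ry': "rep m' d' y = x'" "rep m' d' z = x'" using yz U2 unfolding fib_def by auto
  have dd: "d \<in> dirs k m" "prim k d" "d' \<in> dirs k m'" "prim k d'" using d d' unfolding DD_def by auto
  have k0: "0 < k" using k by simp
  have a: "d 0 \<in> cA m 0" "d' 0 \<in> cA m' 0" using dd(1) dd(3) k0 unfolding dirs_def by auto
  then have d0: "d 0 = int m" "d' 0 = int m'" by (simp_all add: cA_def)
  define u where "u = jj m y - jj m z"
  define v where "v = jj m' y - jj m' z"
  have eu: "y i - z i = u * d i" for i using rep_eq[OF ry(1)] rep_eq[OF ry(2)] unfolding u_def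
    by (simp add: algebra_simps)
  have ev: "y i - z i = v * d' i" for i using rep_eq[OF ry'(1)] rep_eq[OF ry'(2)] unfolding v_def
    by (simp add: algebra_simps)
  have u0: "u \<noteq> 0"
  proof
    assume "u = 0" then have "y = z" using eu by (simp add: fun_eq_iff)
    then show False using yz by simp
  qed
  have v0: "v \<noteq> 0"
  proof
    assume "v = 0" then have "y = z" using ev by (simp add: fun_eq_iff)
    then show False using yz by simp
  qed
  have "\<forall>i<k. u * d i = v * d' i" using eu ev by metis
  then have "\<forall>i<k. d i = d' i" using prim_eq[OF dd(2) dd(4) _ _ _ u0 v0] k d0 m m' by simp
  moreover have "\<forall>i\<ge>k. d i = d' i" using dd unfolding dirs_def by auto
  ultimately have "d = d'" by (metis not_le fun_eq_iff)
  then have "x = x'" using ry ry' d0 by simp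
  then show False using ne \<open>d = d'\<close> by simp
qed



lemma DD_d0: "d \<in> DD k m \<Longrightarrow> k \<ge> 1 \<Longrightarrow> d 0 = int m"
proof -
  assume d: "d \<in> DD k m" and k: "k \<ge> 1"
  have "d 0 \<in> cA m 0" using d k unfolding DD_def dirs_def by auto
  then show ?thesis by (simp add: cA_def)
qed

lemma per_dir:
  assumes S: "S \<subseteq> grid n k" and k: "k \<ge> 3" and m: "m \<ge> 1" and d: "d \<in> DD k m" and n: "n \<ge> 1"
    and big: "real (card S) \<ge> 2 * real k * (real m * (2 * real n) ^ (k - 1))"
  shows "(\<Sum>x\<in>RR k n m. real (card (fib S m d x) choose k))
     \<ge> real (card S) ^ k / (2 ^ k * real k ^ k * (2 * real n) ^ ((k - 1) * (k - 1))) / real m ^ (k - 1)"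
proof -
  have k1: "k \<ge> 1" using k by simp
  have dd: "d \<in> dirs k m" using d unfolding DD_def by auto
  have cR: "real (card (RR k n m)) = real m * (2 * real n) ^ (k - 1)" using card_RR[OF k1] by simp
  have Rne: "RR k n m \<noteq> {}"
  proof -
    have "(\<lambda>i. if i < k then 1 else 0) \<in> RR k n m" using m n unfolding RR_def rA_def by auto
    then show ?thesis by blast
  qed
  have fs: "(\<Sum>x\<in>RR k n m. card (fib S m d x)) = card S" by (rule fib_sum[OF S dd m k1])
  have "(\<Sum>x\<in>RR k n m. real (card (fib S m d x) choose k))
      \<ge> (real (\<Sum>x\<in>RR k n m. card (fib S m d x))) ^ k / (2 ^ k * real k ^ k * real (card (RR k n m)) ^ (k - 1))"
    by (rule jensen_binom[OF finite_RR Rne k1]) (use big fs cR in simp)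
  also have "real (card (RR k n m)) ^ (k - 1) = real m ^ (k - 1) * (2 * real n) ^ ((k - 1) * (k - 1))"
    unfolding cR by (simp add: power_mult_distrib power_mult)
  finally show ?thesis unfolding fs by (simp add: field_simps)
qed

lemma count_main:
  assumes S: "S \<subseteq> grid n k" and k: "k \<ge> 3" and n: "n \<ge> 1"
    and big: "\<forall>m\<in>{1..M}. real (card S) \<ge> 2 * real k * (real m * (2 * real n) ^ (k - 1))"
  shows "real (spanned_edges n k k S)
     \<ge> real M * (real (card S) ^ k / (2 ^ k * real k ^ k * (2 * real n) ^ ((k - 1) * (k - 1)))) / 4"
proof -
  define P where "P = real (card S) ^ k / (2 ^ k * real k ^ k * (2 * real n) ^ ((k - 1) * (k - 1)))"
  have k1: "k \<ge> 1" and k2: "k \<ge> 2" using k by simp_all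
  define DU where "DU = (\<Union>m\<in>{1..M}. DD k m)"
  define Idx where "Idx = (SIGMA d:DU. RR k n (nat (d 0)))"
  define g where "g p = ksets (fib S (nat (fst p 0)) (fst p) (snd p)) k" for p
  define f where "f d x = card (fib S (nat (d 0)) d x) choose k" for d x
  have finDD: "finite (DD k m)" for m using finite_dirs[of k m] unfolding DD_def by simp
  have finDU: "finite DU" unfolding DU_def using finDD by simp
  have finIdx: "finite Idx" unfolding Idx_def using finDU finite_RR by simp
  have fS: "finite S" using S finite_grid finite_subset by blast
  have fib_fin: "finite (fib S m d x)" for m d x unfolding fib_def using fS by simp
  have DUm: "\<exists>m\<in>{1..M}. d \<in> DD k m \<and> nat (d 0) = m" if dU: "d \<in> DU" for d
  proof -
    obtain m where m: "m \<in> {1..M}" "d \<in> DD k m" using dU unfolding DU_def by auto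
    then have "nat (d 0) = m" using DD_d0[OF m(2) k1] by simp
    then show ?thesis using m by blast
  qed
  have sub: "(\<Union>p\<in>Idx. g p) \<subseteq> {e \<in> H_edges n k k. e \<subseteq> S}"
  proof
    fix U assume "U \<in> (\<Union>p\<in>Idx. g p)"
    then obtain d x where dx: "(d, x) \<in> Idx" and U: "U \<in> g (d, x)" by auto
    have "d \<in> DU" using dx unfolding Idx_def by auto
    then obtain m where m: "m \<in> {1..M}" "d \<in> DD k m" "nat (d 0) = m" using DUm by blast
    have "U \<in> ksets (fib S m d x) k" using U m unfolding g_def by simp
    moreover have "d \<in> dirs k m" using m unfolding DD_def by auto
    ultimately show "U \<in> {e \<in> H_edges n k k. e \<subseteq> S}" using ksets_edge[OF _ S _ _ k1] m by auto
  qed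
  have finE: "finite {e \<in> H_edges n k k. e \<subseteq> S}"
  proof (rule finite_subset)
    show "{e \<in> H_edges n k k. e \<subseteq> S} \<subseteq> Pow S" by auto
    show "finite (Pow S)" using fS by simp
  qed
  have "card (\<Union>p\<in>Idx. g p) \<le> spanned_edges n k k S"
    unfolding spanned_edges_def by (rule card_mono[OF finE sub])
  moreover have "card (\<Union>p\<in>Idx. g p) = (\<Sum>p\<in>Idx. card (g p))"
  proof (rule card_UN_disjoint[OF finIdx])
    show "\<forall>p\<in>Idx. finite (g p)" unfolding g_def ksets_def using fib_fin by simp
    show "\<forall>p\<in>Idx. \<forall>q\<in>Idx. p \<noteq> q \<longrightarrow> g p \<inter> g q = {}"
    proof (intro ballI impI)
      fix p q assume p: "p \<in> Idx" and q: "q \<in> Idx" and pq: "p \<noteq> q"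
      obtain d x where pe: "p = (d, x)" by (cases p)
      obtain d' x' where qe: "q = (d', x')" by (cases q)
      have "d \<in> DU" "d' \<in> DU" using p q pe qe unfolding Idx_def by auto
      then have e1: "\<exists>m\<in>{1..M}. d \<in> DD k m \<and> nat (d 0) = m" and e2: "\<exists>m\<in>{1..M}. d' \<in> DD k m \<and> nat (d' 0) = m"
        using DUm by auto
      obtain m where m: "m \<in> {1..M}" "d \<in> DD k m" "nat (d 0) = m" using e1 by blast
      obtain m' where m': "m' \<in> {1..M}" "d' \<in> DD k m'" "nat (d' 0) = m'" using e2 by blast
      have "ksets (fib S m d x) k \<inter> ksets (fib S m' d' x') k = {}"
        by (rule ksets_disj[OF m(2) m'(2) _ _ k2]) (use m m' pq pe qe in auto)
      then show "g p \<inter> g q = {}" unfolding g_def pe qe using m m' by simp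
    qed
  qed
  moreover have "(\<Sum>p\<in>Idx. card (g p)) = (\<Sum>p\<in>Idx. f (fst p) (snd p))"
  proof (rule sum.cong)
    fix p assume "p \<in> Idx"
    show "card (g p) = f (fst p) (snd p)" unfolding g_def f_def ksets_def by (rule n_subsets[OF fib_fin])
  qed simp
  moreover have "(\<Sum>p\<in>Idx. f (fst p) (snd p)) = (\<Sum>d\<in>DU. \<Sum>x\<in>RR k n (nat (d 0)). f d x)"
    unfolding Idx_def by (subst sum.Sigma[OF finDU]) (auto simp: finite_RR split_def)
  moreover have "(\<Sum>d\<in>DU. \<Sum>x\<in>RR k n (nat (d 0)). f d x) = (\<Sum>m\<in>{1..M}. \<Sum>d\<in>DD k m. \<Sum>x\<in>RR k n (nat (d 0)). f d x)"
    unfolding DU_def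
  proof (rule sum.UNION_disjoint)
    show "\<forall>i\<in>{1..M}. \<forall>j\<in>{1..M}. i \<noteq> j \<longrightarrow> DD k i \<inter> DD k j = {}"
    proof (intro ballI impI)
      fix i j :: nat assume "i \<noteq> j"
      show "DD k i \<inter> DD k j = {}"
      proof (rule ccontr)
        assume "DD k i \<inter> DD k j \<noteq> {}"
        then obtain d where "d \<in> DD k i" "d \<in> DD k j" by blast
        then have "d 0 = int i" "d 0 = int j" using DD_d0[OF _ k1] by blast+
        then show False using \<open>i \<noteq> j\<close> by simp
      qed
    qed
  qed (use finDD in auto)
  ultimately have cnt: "real (spanned_edges n k k S) \<ge> real (\<Sum>m\<in>{1..M}. \<Sum>d\<in>DD k m. \<Sum>x\<in>RR k n (nat (d 0)). f d x)"
    by (simp only: of_nat_le_iff)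
  have inner: "(\<Sum>x\<in>RR k n (nat (d 0)). real (f d x)) = (\<Sum>x\<in>RR k n m. real (card (fib S m d x) choose k))"
    if dm: "d \<in> DD k m" for m d
  proof -
    have "nat (d 0) = m" using DD_d0[OF dm k1] by simp
    then show ?thesis unfolding f_def by simp
  qed
  have "real (\<Sum>m\<in>{1..M}. \<Sum>d\<in>DD k m. \<Sum>x\<in>RR k n (nat (d 0)). f d x)
      = (\<Sum>m\<in>{1..M}. \<Sum>d\<in>DD k m. \<Sum>x\<in>RR k n (nat (d 0)). real (f d x))"
    by (simp only: of_nat_sum)
  also have "\<dots> = (\<Sum>m\<in>{1..M}. \<Sum>d\<in>DD k m. \<Sum>x\<in>RR k n m. real (card (fib S m d x) choose k))"
    by (rule sum.cong[OF refl], rule sum.cong[OF refl], rule inner)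
  also have "\<dots> \<ge> (\<Sum>m\<in>{1..M}. P / 4)"
  proof (rule sum_mono)
    fix m assume m: "m \<in> {1..M}"
    have m1: "m \<ge> 1" using m by simp
    have "(\<Sum>d\<in>DD k m. \<Sum>x\<in>RR k n m. real (card (fib S m d x) choose k)) \<ge> (\<Sum>d\<in>DD k m. P / real m ^ (k - 1))"
      unfolding P_def by (rule sum_mono, rule per_dir[OF S k m1 _ n]) (use big m in auto)
    also have "(\<Sum>d\<in>DD k m. P / real m ^ (k - 1)) = real (card (DD k m)) * (P / real m ^ (k - 1))" by simp
    also have "\<dots> \<ge> real m ^ (k - 1) / 4 * (P / real m ^ (k - 1))"
      by (rule mult_right_mono[OF card_DD[OF k m1]]) (simp add: P_def)
    also have "real m ^ (k - 1) / 4 * (P / real m ^ (k - 1)) = P / 4" using m1 by simp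
    finally show "P / 4 \<le> (\<Sum>d\<in>DD k m. \<Sum>x\<in>RR k n m. real (card (fib S m d x) choose k))" .
  qed
  also have "(\<Sum>m\<in>{1..M}. P / 4) = real M * P / 4" by simp
  finally show ?thesis using cnt unfolding P_def by linarith
qed



lemma final_arith:
  fixes g nr L :: real and k :: nat
  assumes k: "k \<ge> 3" and g: "g > 0" and nr: "nr \<ge> 1" and L: "L \<ge> 1"
  shows "g ^ (k + 1) * nr ^ (2 * k) / (fact k * 2 ^ (3 * k\<^sup>2) * 10 * 2 ^ (3 * k) * real k * L)
    \<le> g * nr / (real k * 2 ^ k) / 2 * ((g * nr ^ k) ^ k / (2 ^ k * real k ^ k * (2 * nr) ^ ((k - 1) * (k - 1)))) / 4"
proof -
  obtain j where kj: "k = Suc j" using k by (cases k) auto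
  have kk: "k - 1 = j" using kj by simp
  define D1 :: real where "D1 = real k ^ (k + 1) * 2 ^ (2 * k + j * j + 3)"
  have nr0: "nr > 0" using nr by simp
  have kr: "real k > 0" using k by simp
  have e1: "(g * nr ^ k) ^ k = g ^ k * nr ^ (k * k)" by (simp add: power_mult_distrib power_mult)
  have e2: "(2 * nr) ^ (j * j) = 2 ^ (j * j) * nr ^ (j * j)" by (simp add: power_mult_distrib)
  have e3: "nr * nr ^ (k * k) = nr ^ (2 * k) * nr ^ (j * j)"
  proof -
    have "Suc (k * k) = 2 * k + j * j" using kj by (simp add: algebra_simps)
    then show ?thesis by (metis power_Suc power_add)
  qed
  have e4: "g * g ^ k = g ^ (k + 1)" by simp
  have p: "(2::real) ^ (2 * k + j * j + 3) = 2 ^ k * 2 ^ k * 2 ^ (j * j) * 8"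
  proof -
    have "2 * k + j * j + 3 = k + k + j * j + 3" by simp
    then have "(2::real) ^ (2 * k + j * j + 3) = 2 ^ (k + k + j * j + 3)" by (simp only:)
    also have "\<dots> = 2 ^ k * 2 ^ k * 2 ^ (j * j) * 2 ^ 3" by (simp only: power_add)
    finally show ?thesis by simp
  qed
  have pk: "real k ^ (k + 1) = real k * real k ^ k" by simp
  have e5: "real k * 2 ^ k * 2 * (2 ^ k * real k ^ k * (2 ^ (j * j) * nr ^ (j * j))) * 4 = D1 * nr ^ (j * j)"
    unfolding D1_def p pk by (simp add: ac_simps)
  have lhs: "g * nr / (real k * 2 ^ k) / 2 * ((g * nr ^ k) ^ k / (2 ^ k * real k ^ k * (2 * nr) ^ ((k - 1) * (k - 1)))) / 4
      = g ^ (k + 1) * nr ^ (2 * k) / D1"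
  proof -
    have "g * nr / (real k * 2 ^ k) / 2 * ((g * nr ^ k) ^ k / (2 ^ k * real k ^ k * (2 * nr) ^ ((k - 1) * (k - 1)))) / 4
       = (g * g ^ k) * (nr * nr ^ (k * k)) / (real k * 2 ^ k * 2 * (2 ^ k * real k ^ k * (2 ^ (j * j) * nr ^ (j * j))) * 4)"
      unfolding kk e1 e2 by (simp add: field_simps)
    also have "\<dots> = g ^ (k + 1) * (nr ^ (2 * k) * nr ^ (j * j)) / (D1 * nr ^ (j * j))"
      unfolding e3 e4 e5 by simp
    also have "\<dots> = g ^ (k + 1) * nr ^ (2 * k) / D1" using nr0 by simp
    finally show ?thesis .
  qed
  have kpow: "real k ^ k \<le> 2 ^ (k * k)"
  proof -
    have "real k \<le> 2 ^ k" using of_nat_less_two_power[of k] by (simp add: less_imp_le)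
    then have "real k ^ k \<le> (2 ^ k) ^ k" by (intro power_mono) auto
    then show ?thesis by (simp add: power_mult)
  qed
  have D1le: "D1 \<le> real k * 2 ^ (3 * k\<^sup>2)"
  proof -
    have "D1 = real k * real k ^ k * 2 ^ (2 * k + j * j + 3)" unfolding D1_def by simp
    also have "\<dots> \<le> real k * 2 ^ (k * k) * 2 ^ (2 * k + j * j + 3)"
      using kpow kr by (intro mult_right_mono mult_left_mono) auto
    also have "\<dots> = real k * 2 ^ (k * k + (2 * k + j * j + 3))" by (simp add: power_add)
    also have "\<dots> \<le> real k * 2 ^ (3 * k\<^sup>2)"
    proof -
      have "k * k + (2 * k + j * j + 3) \<le> 3 * k\<^sup>2" using kj k by (simp add: power2_eq_square algebra_simps)
      then have "(2::real) ^ (k * k + (2 * k + j * j + 3)) \<le> 2 ^ (3 * k\<^sup>2)" by (intro power_increasing) auto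
      then show ?thesis using kr by simp
    qed
    finally show ?thesis .
  qed
  have D1pos: "D1 > 0" unfolding D1_def using kr by simp
  have Dt: "real k * 2 ^ (3 * k\<^sup>2) \<le> fact k * 2 ^ (3 * k\<^sup>2) * 10 * 2 ^ (3 * k) * real k * L"
  proof -
    have f1: "(1::real) \<le> fact k" by simp
    have p1: "(1::real) \<le> 2 ^ (3 * k)" by simp
    have "1 \<le> fact k * 10 * 2 ^ (3 * k) * L"
    proof -
      have a: "1 \<le> 10 * (2::real) ^ (3 * k)" using p1 by linarith
      have "1 * 1 \<le> (10 * 2 ^ (3 * k)) * L" by (rule mult_mono) (use a L in auto)
      then have b: "1 \<le> 10 * 2 ^ (3 * k) * L" by simp
      have "1 * 1 \<le> fact k * (10 * 2 ^ (3 * k) * L)" by (rule mult_mono) (use f1 b in auto)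
      then have "1 \<le> fact k * (10 * 2 ^ (3 * k) * L)" by simp
      then show ?thesis by (simp add: ac_simps)
    qed
    then have "real k * 2 ^ (3 * k\<^sup>2) * 1 \<le> real k * 2 ^ (3 * k\<^sup>2) * (fact k * 10 * 2 ^ (3 * k) * L)"
      using kr by (intro mult_left_mono) auto
    then show ?thesis by (simp add: ac_simps)
  qed
  have "g ^ (k + 1) * nr ^ (2 * k) / (fact k * 2 ^ (3 * k\<^sup>2) * 10 * 2 ^ (3 * k) * real k * L)
      \<le> g ^ (k + 1) * nr ^ (2 * k) / D1"
  proof (rule divide_left_mono)
    show le: "D1 \<le> fact k * 2 ^ (3 * k\<^sup>2) * 10 * 2 ^ (3 * k) * real k * L" using D1le Dt by linarith
    show "0 \<le> g ^ (k + 1) * nr ^ (2 * k)" using g nr0 by simp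
    have "0 < fact k * 2 ^ (3 * k\<^sup>2) * 10 * 2 ^ (3 * k) * real k * L" using le D1pos by linarith
    then show "0 < (fact k * 2 ^ (3 * k\<^sup>2) * 10 * 2 ^ (3 * k) * real k * L) * D1" using D1pos by simp
  qed
  then show ?thesis unfolding lhs .
qed



theorem lemma4p4:
  shows "\<exists>N::nat. \<forall>n\<ge>N. \<forall>k::nat. \<forall>\<gamma>::real. \<forall>S.
     3 \<le> k \<longrightarrow> real k < 0.01 * sqrt (log 2 (real n)) \<longrightarrow>
     0.1 < \<gamma> \<longrightarrow> \<gamma> \<le> 1 \<longrightarrow>
     S \<subseteq> grid n k \<longrightarrow> real (card S) = \<gamma> * real n ^ k \<longrightarrow>
     real (spanned_edges n k k S) \<ge>
       \<gamma> ^ (k + 1) * real n ^ (2 * k) /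
       (fact k * 2 ^ (3 * k\<^sup>2) * 10 * 2 ^ (3 * k) * real k * log 2 (real n))"
proof (intro exI[of _ 1] allI impI)
  fix n k :: nat and \<gamma> :: real and S
  assume h1: "1 \<le> n" and k: "3 \<le> k" and hk: "real k < 0.01 * sqrt (log 2 (real n))"
    and g1: "0.1 < \<gamma>" and g2: "\<gamma> \<le> 1" and S: "S \<subseteq> grid n k"
    and cS: "real (card S) = \<gamma> * real n ^ k"
  define L where "L = log 2 (real n)"
  have k3: "real k \<ge> 3" using k by simp
  have hk': "real k < 0.01 * sqrt L" using hk unfolding L_def .
  have "(3::real) < 0.01 * sqrt L" using k3 hk' by linarith
  then have sL: "sqrt L > 300" by simp
  have s300: "sqrt 90000 = (300::real)"
  proof -
    have "sqrt ((300::real)\<^sup>2) = 300" by simp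
    then show ?thesis by simp
  qed
  have "sqrt 90000 < sqrt L" using sL s300 by simp
  then have L9: "L > 90000" by (simp only: real_sqrt_less_iff)
  have npos: "real n > 0" using h1 by simp
  have nL: "2 powr L = real n" unfolding L_def using npos by simp
  have sLL: "sqrt L * sqrt L = L" using L9 by simp
  have "300 * sqrt L \<le> sqrt L * sqrt L" using sL L9 by (intro mult_right_mono) auto
  then have "sqrt L \<le> L / 300" using sLL by simp
  then have kL: "real k < L / 30000" using hk' by simp
  have kL2: "real (2 * k + 5) \<le> L" using kL L9 by simp
  have p1: "(2::real) ^ (2 * k + 5) \<le> real n"
  proof -
    have "(2::real) ^ (2 * k + 5) = 2 powr (real (2 * k + 5))" by (rule powr_realpow[symmetric]) simp
    also have "\<dots> \<le> 2 powr L" using kL2 by (intro powr_mono) auto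
    finally show ?thesis using nL by simp
  qed
  have kr: "real k \<le> 2 ^ k" using of_nat_less_two_power[of k] by (simp add: less_imp_le)
  have kpos: "real k > 0" using k by simp
  define X where "X = \<gamma> * real n / (real k * 2 ^ k)"
  have X2: "X \<ge> 2"
  proof -
    have "(2::real) ^ (2 * k + 5) = 2 ^ k * 2 ^ k * 2 ^ 5" by (simp only: mult_2 power_add)
    then have "(2::real) ^ (2 * k + 5) = 32 * 2 ^ k * 2 ^ k" by simp
    then have "20 * real k * 2 ^ k \<le> real n" using p1 kr by (smt (verit) mult_right_mono zero_le_power)
    moreover have "0.1 * real n \<le> \<gamma> * real n" by (rule mult_right_mono) (use g1 in auto)
    ultimately have "2 * (real k * 2 ^ k) \<le> \<gamma> * real n" by linarith
    then show ?thesis unfolding X_def using kpos by (simp add: field_simps)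
  qed
  define M where "M = nat \<lfloor>X\<rfloor>"
  have MX: "real M \<ge> X / 2" "real M \<le> X" unfolding M_def using X2 by linarith+
  have big: "\<forall>m\<in>{1..M}. real (card S) \<ge> 2 * real k * (real m * (2 * real n) ^ (k - 1))"
  proof
    fix m assume m: "m \<in> {1..M}"
    then have mX: "real m \<le> X" using MX by simp
    obtain j where kj: "k = Suc j" using k by (cases k) auto
    have "2 * real k * (real m * (2 * real n) ^ (k - 1)) \<le> 2 * real k * (X * (2 * real n) ^ (k - 1))"
      using mX kpos npos by (intro mult_left_mono mult_right_mono) auto
    also have "\<dots> = (2 * real k * X) * (2 * real n) ^ j" using kj by simp
    also have "(2 * real n) ^ j = 2 ^ j * real n ^ j" by (simp add: power_mult_distrib)
    also have "2 * real k * X * (2 ^ j * real n ^ j) = (real k * (2 * 2 ^ j) * X) * real n ^ j" by (simp add: ac_simps)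
    also have "real k * (2 * 2 ^ j) * X = \<gamma> * real n"
    proof -
      have "real k * 2 ^ k * X = \<gamma> * real n" unfolding X_def using kpos by simp
      then show ?thesis using kj by simp
    qed
    also have "\<gamma> * real n * real n ^ j = \<gamma> * real n ^ k" using kj by simp
    finally show "2 * real k * (real m * (2 * real n) ^ (k - 1)) \<le> real (card S)" using cS by simp
  qed
  have cnt: "real (spanned_edges n k k S)
     \<ge> real M * (real (card S) ^ k / (2 ^ k * real k ^ k * (2 * real n) ^ ((k - 1) * (k - 1)))) / 4"
    by (rule count_main[OF S k h1 big])
  define P where "P = (\<gamma> * real n ^ k) ^ k / (2 ^ k * real k ^ k * (2 * real n) ^ ((k - 1) * (k - 1)))"
  have P0: "P \<ge> 0" unfolding P_def using g1 npos by simp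
  have "X / 2 * P / 4 \<le> real M * P / 4" using MX P0 by (intro divide_right_mono mult_right_mono) auto
  also have "\<dots> \<le> real (spanned_edges n k k S)" using cnt unfolding P_def cS .
  finally have c2: "X / 2 * P / 4 \<le> real (spanned_edges n k k S)" .
  have L1: "L \<ge> 1" using L9 by simp
  have "\<gamma> ^ (k + 1) * real n ^ (2 * k) / (fact k * 2 ^ (3 * k\<^sup>2) * 10 * 2 ^ (3 * k) * real k * L)
      \<le> X / 2 * P / 4"
    unfolding X_def P_def using final_arith[OF k _ _ L1, of \<gamma> "real n"] g1 h1 by simp
  then show "\<gamma> ^ (k + 1) * real n ^ (2 * k) / (fact k * 2 ^ (3 * k\<^sup>2) * 10 * 2 ^ (3 * k) * real k * log 2 (real n))
      \<le> real (spanned_edges n k k S)" using c2 unfolding L_def by linarith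
qed

end
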